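(* Let $G$ be a finite graph, $F$ a normal spanning forest of $G$, $x$ a vertex of $G$, and $B\subseteq\mathrm{Pred}_F(x)$. Let $p,d\in\mathbb{N}$. (a) If $|B|\ge p$ and there are $p$ distinct immediate successors $y$ of $x$ in $F$ with $B_F(y)=B\cup\{x\}$, then $K_{p,p}$ is a minor of $G$. (b) If $|B|<p$ and $\mathrm{Sep}(G,p)\le d$, then there are at most $d$ immediate successors $y$ of $x$ in $F$ with $B_F(y)=B\cup\{x\}$.
   Context: Graphs are finite, simple, undirected. A spanning forest $F$ of $G$ is a rooted forest on the vertex set of $G$ using edges of $G$, with edges oriented away from the roots; its tree-order is $x\preceq_F y$ iff some path from a root to $y$ contains $x$; immediate successors of $x$ are the children of $x$ in $F$. $F$ is normal if the two ends of every edge of $G$ are $\preceq_F$-comparable. $\mathrm{Pred}_F(x)=\{y: y\prec_F x\}$. $B_F(x)=\{v\prec_F x : \text{there is an edge }(u,v)\text{ of }G\text{ with }x\preceq_F u\}$. $\mathrm{Sep}(G,k)$ is the maximum over vertex sets $S$ with $|S|\le k$ of the number of connected components of $G-S$. *)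

theory Defs
  imports Main
begin

definition graph :: "'a set \<Rightarrow> ('a \<Rightarrow> 'a \<Rightarrow> bool) \<Rightarrow> bool" where
  "graph V E \<longleftrightarrow> finite V \<and> (\<forall>u v. E u v \<longrightarrow> u \<in> V \<and> v \<in> V \<and> E v u \<and> u \<noteq> v)"

definition induced_rel :: "('a \<Rightarrow> 'a \<Rightarrow> bool) \<Rightarrow> 'a set \<Rightarrow> ('a \<times> 'a) set" where
  "induced_rel E W = {(a, b). a \<in> W \<and> b \<in> W \<and> E a b}"

definition conn_in :: "('a \<Rightarrow> 'a \<Rightarrow> bool) \<Rightarrow> 'a set \<Rightarrow> 'a \<Rightarrow> 'a \<Rightarrow> bool" where
  "conn_in E W u v \<longleftrightarrow> u \<in> W \<and> v \<in> W \<and> (u, v) \<in> (induced_rel E W)\<^sup>*"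

definition components :: "('a \<Rightarrow> 'a \<Rightarrow> bool) \<Rightarrow> 'a set \<Rightarrow> 'a set set" where
  "components E W = {{v. conn_in E W u v} | u. u \<in> W}"

definition connected_set :: "('a \<Rightarrow> 'a \<Rightarrow> bool) \<Rightarrow> 'a set \<Rightarrow> bool" where
  "connected_set E W \<longleftrightarrow> W \<noteq> {} \<and> (\<forall>u\<in>W. \<forall>v\<in>W. conn_in E W u v)"

definition Sep :: "'a set \<Rightarrow> ('a \<Rightarrow> 'a \<Rightarrow> bool) \<Rightarrow> nat \<Rightarrow> nat" where
  "Sep V E k = Max {card (components E (V - S)) | S. S \<subseteq> V \<and> card S \<le> k}"

definition Kpp_minor :: "'a set \<Rightarrow> ('a \<Rightarrow> 'a \<Rightarrow> bool) \<Rightarrow> nat \<Rightarrow> bool" where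
  "Kpp_minor V E p \<longleftrightarrow> (\<exists>A B :: nat \<Rightarrow> 'a set.
     (\<forall>i<p. A i \<subseteq> V \<and> B i \<subseteq> V \<and> connected_set E (A i) \<and> connected_set E (B i)) \<and>
     (\<forall>i<p. \<forall>j<p. i \<noteq> j \<longrightarrow> A i \<inter> A j = {} \<and> B i \<inter> B j = {}) \<and>
     (\<forall>i<p. \<forall>j<p. A i \<inter> B j = {}) \<and>
     (\<forall>i<p. \<forall>j<p. \<exists>a\<in>A i. \<exists>b\<in>B j. E a b))"

text \<open>A rooted spanning forest is given by a parent function: par v = Some u means u is the
  parent of v (edge uv of G oriented away from the root); roots have par v = None.\<close>
definition parent_rel :: "('a \<Rightarrow> 'a option) \<Rightarrow> ('a \<times> 'a) set" where
  "parent_rel par = {(u, v). par v = Some u}"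

definition spanning_forest :: "'a set \<Rightarrow> ('a \<Rightarrow> 'a \<Rightarrow> bool) \<Rightarrow> ('a \<Rightarrow> 'a option) \<Rightarrow> bool" where
  "spanning_forest V E par \<longleftrightarrow>
     (\<forall>u v. par v = Some u \<longrightarrow> v \<in> V \<and> u \<in> V \<and> E u v) \<and> acyclic (parent_rel par)"

definition tree_le :: "('a \<Rightarrow> 'a option) \<Rightarrow> 'a \<Rightarrow> 'a \<Rightarrow> bool" where
  "tree_le par x y \<longleftrightarrow> (x, y) \<in> (parent_rel par)\<^sup>*"

definition tree_lt :: "('a \<Rightarrow> 'a option) \<Rightarrow> 'a \<Rightarrow> 'a \<Rightarrow> bool" where
  "tree_lt par x y \<longleftrightarrow> tree_le par x y \<and> x \<noteq> y"

definition normal_forest :: "'a set \<Rightarrow> ('a \<Rightarrow> 'a \<Rightarrow> bool) \<Rightarrow> ('a \<Rightarrow> 'a option) \<Rightarrow> bool" where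
  "normal_forest V E par \<longleftrightarrow> spanning_forest V E par \<and>
     (\<forall>u v. E u v \<longrightarrow> tree_le par u v \<or> tree_le par v u)"

definition Pred :: "('a \<Rightarrow> 'a option) \<Rightarrow> 'a \<Rightarrow> 'a set" where
  "Pred par x = {y. tree_lt par y x}"

definition BF :: "('a \<Rightarrow> 'a \<Rightarrow> bool) \<Rightarrow> ('a \<Rightarrow> 'a option) \<Rightarrow> 'a \<Rightarrow> 'a set" where
  "BF E par x = {v. tree_lt par v x \<and> (\<exists>u. E u v \<and> tree_le par x u)}"

end

theory Submission
  imports Defs
begin

lemma R_edge: "spanning_forest V E par \<Longrightarrow> (u,v) \<in> parent_rel par \<Longrightarrow> u \<in> V \<and> v \<in> V \<and> E u v"
  by (auto simp: spanning_forest_def parent_rel_def)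

lemma R_V: assumes "spanning_forest V E par" "(a,u) \<in> (parent_rel par)\<^sup>*" "a \<in> V" shows "u \<in> V"
  using assms(2,3) by (induction rule: rtrancl_induct) (auto dest: R_edge[OF assms(1)])

lemma R_V2: "spanning_forest V E par \<Longrightarrow> (a,u) \<in> (parent_rel par)\<^sup>* \<Longrightarrow> a \<noteq> u \<Longrightarrow> a \<in> V"
  by (erule converse_rtranclE) (auto dest: R_edge)

lemma R_chain:
  assumes "(a,u) \<in> (parent_rel par)\<^sup>*"
  shows "(b,u) \<in> (parent_rel par)\<^sup>* \<Longrightarrow> (a,b) \<in> (parent_rel par)\<^sup>* \<or> (b,a) \<in> (parent_rel par)\<^sup>*"
  using assms
proof (induction arbitrary: b rule: rtrancl_induct)
  case base
  then show ?case by simp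
next
  case (step w u)
  show ?case
  proof (cases "b = u")
    case True
    then show ?thesis using step by auto
  next
    case False
    from step.prems False obtain w' where "(b,w') \<in> (parent_rel par)\<^sup>*" "(w',u) \<in> parent_rel par"
      by (metis rtranclE)
    moreover have "w' = w" using step.hyps(2) calculation(2) by (auto simp: parent_rel_def)
    ultimately show ?thesis using step.IH by auto
  qed
qed

lemma R_acyc: "spanning_forest V E par \<Longrightarrow> (a,b) \<in> (parent_rel par)\<^sup>+ \<Longrightarrow> (b,a) \<in> (parent_rel par)\<^sup>* \<Longrightarrow> False"
proof -
  assume a: "spanning_forest V E par" "(a,b) \<in> (parent_rel par)\<^sup>+" "(b,a) \<in> (parent_rel par)\<^sup>*"
  then have "(a,a) \<in> (parent_rel par)\<^sup>+" using trancl_rtrancl_trancl by fast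
  then show False using a(1) unfolding spanning_forest_def acyclic_def by blast
qed

lemma R_children:
  assumes "spanning_forest V E par" "par a = Some x" "par b = Some x" "(a,b) \<in> (parent_rel par)\<^sup>*"
  shows "a = b"
proof (rule ccontr)
  assume "a \<noteq> b"
  with assms(4) obtain w where "(a,w) \<in> (parent_rel par)\<^sup>*" "(w,b) \<in> parent_rel par"
    by (metis rtranclE)
  then have "w = x" using assms(3) by (auto simp: parent_rel_def)
  have "(x,a) \<in> (parent_rel par)\<^sup>+" using assms(2) by (auto simp: parent_rel_def)
  then show False using R_acyc[OF assms(1)] \<open>(a,w) \<in> _\<close> \<open>w = x\<close> by blast
qed

lemma conn_T:
  assumes "spanning_forest V E par" "(y,u) \<in> (parent_rel par)\<^sup>*"
  shows "conn_in E {u. (y,u) \<in> (parent_rel par)\<^sup>*} y u"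
  using assms(2)
proof (induction rule: rtrancl_induct)
  case base
  then show ?case by (simp add: conn_in_def)
next
  case (step w u)
  then have "(w,u) \<in> induced_rel E {u. (y,u) \<in> (parent_rel par)\<^sup>*}"
    using R_edge[OF assms(1) step(2)] by (auto simp: induced_rel_def intro: rtrancl_into_rtrancl)
  with step show ?case by (auto simp: conn_in_def intro: rtrancl_into_rtrancl)
qed

lemma conn_mono: "conn_in E W u v \<Longrightarrow> W \<subseteq> W' \<Longrightarrow> conn_in E W' u v"
proof -
  assume a: "conn_in E W u v" "W \<subseteq> W'"
  have "induced_rel E W \<subseteq> induced_rel E W'" using a(2) by (auto simp: induced_rel_def)
  then show ?thesis using a by (auto simp: conn_in_def intro: rtrancl_mono[THEN subsetD])
qed

lemma conn_sym: "graph V E \<Longrightarrow> conn_in E W u v \<Longrightarrow> conn_in E W v u"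
proof -
  assume g: "graph V E" and c: "conn_in E W u v"
  have "(induced_rel E W)\<inverse> = induced_rel E W" using g by (auto simp: induced_rel_def graph_def)
  have "(v,u) \<in> ((induced_rel E W)\<inverse>)\<^sup>*" using c unfolding conn_in_def by (blast intro: rtrancl_converseI)
  then show ?thesis using c unfolding conn_in_def by (simp add: \<open>_ = induced_rel E W\<close>)
qed

lemma conn_trans: "conn_in E W u v \<Longrightarrow> conn_in E W v w \<Longrightarrow> conn_in E W u w"
  unfolding conn_in_def by auto

lemma T_connected:
  assumes "graph V E" "spanning_forest V E par"
  shows "connected_set E {u. (y,u) \<in> (parent_rel par)\<^sup>*}"
  unfolding connected_set_def
proof (intro conjI ballI)
  show "{u. (y, u) \<in> (parent_rel par)\<^sup>*} \<noteq> {}" by auto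
  fix u v assume "u \<in> {u. (y, u) \<in> (parent_rel par)\<^sup>*}" "v \<in> {u. (y, u) \<in> (parent_rel par)\<^sup>*}"
  then have "conn_in E {u. (y, u) \<in> (parent_rel par)\<^sup>*} y u" "conn_in E {u. (y, u) \<in> (parent_rel par)\<^sup>*} y v"
    using conn_T[OF assms(2)] by auto
  then show "conn_in E {u. (y, u) \<in> (parent_rel par)\<^sup>*} u v"
    using conn_sym[OF assms(1)] conn_trans by metis
qed


lemma lt_V: "spanning_forest V E par \<Longrightarrow> tree_lt par b x \<Longrightarrow> b \<in> V"
  using R_V2[of V E par b x] by (auto simp: tree_lt_def tree_le_def)

theorem lemma4p11:
  fixes V :: "'a set" and E :: "'a \<Rightarrow> 'a \<Rightarrow> bool" and par :: "'a \<Rightarrow> 'a option"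
    and x :: 'a and B :: "'a set" and p d :: nat
  assumes "graph V E"
    and "normal_forest V E par"
    and "x \<in> V"
    and "B \<subseteq> Pred par x"
  shows "(card B \<ge> p \<and>
          (\<exists>Y. card Y = p \<and> (\<forall>y\<in>Y. par y = Some x \<and> BF E par y = insert x B))
            \<longrightarrow> Kpp_minor V E p)
       \<and> (card B < p \<and> Sep V E p \<le> d
            \<longrightarrow> card {y. par y = Some x \<and> BF E par y = insert x B} \<le> d)"
proof -
  let ?R = "parent_rel par"
  define T where "T y = {u. (y,u) \<in> ?R\<^sup>*}" for y
  have sf: "spanning_forest V E par" using assms(2) normal_forest_def by blast
  have finV: "finite V" using assms(1) graph_def by blast
  have BV: "B \<subseteq> V" using assms(4) lt_V[OF sf] unfolding Pred_def by auto
  have finB: "finite B" using BV finV finite_subset by blast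
  have Bx: "(b,x) \<in> ?R\<^sup>*" if "b \<in> B" for b
    using assms(4) that unfolding Pred_def tree_lt_def tree_le_def by auto
  have childR: "(x,y) \<in> ?R" if "par y = Some x" for y using that by (simp add: parent_rel_def)
  have childV: "y \<in> V" if "par y = Some x" for y using R_edge[OF sf childR[OF that]] by blast
  have TV: "T y \<subseteq> V" if "par y = Some x" for y
    using R_V[OF sf _ childV[OF that]] unfolding T_def by auto
  have Tcon: "connected_set E (T y)" for y unfolding T_def using T_connected[OF assms(1) sf] .
  have TS: "u \<notin> insert x B" if "par y = Some x" "u \<in> T y" for y u
  proof
    assume "u \<in> insert x B"
    then have "(u,x) \<in> ?R\<^sup>*" using Bx by auto
    then have "(u,y) \<in> ?R\<^sup>+" using childR[OF that(1)] by (rule rtrancl_into_trancl1)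
    then show False using R_acyc[OF sf] that(2) unfolding T_def by blast
  qed
  have part_a: "Kpp_minor V E p" if cB: "card B \<ge> p" and Y: "card Y = p"
    "\<forall>y\<in>Y. par y = Some x \<and> BF E par y = insert x B" for Y
  proof (cases "p = 0")
    case True
    then show ?thesis unfolding Kpp_minor_def by auto
  next
    case False
    then have finY: "finite Y" using Y(1) card_ge_0_finite by blast
    obtain f where f: "bij_betw f {0..<p} Y" using ex_bij_betw_nat_finite[OF finY] Y(1) by blast
    obtain B' where B': "B' \<subseteq> B" "card B' = p" using obtain_subset_with_card_n[OF cB] by blast
    have finB': "finite B'" using B'(1) finB finite_subset by blast
    obtain g where g: "bij_betw g {0..<p} B'" using ex_bij_betw_nat_finite[OF finB'] B'(2) by blast
    have fY: "i < p \<Longrightarrow> f i \<in> Y" for i using f bij_betwE by fastforce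
    have gB: "i < p \<Longrightarrow> g i \<in> B" for i using g B'(1) bij_betwE by fastforce
    have finj: "i < p \<Longrightarrow> j < p \<Longrightarrow> f i = f j \<Longrightarrow> i = j" for i j
      using f unfolding bij_betw_def inj_on_def by auto
    have ginj: "i < p \<Longrightarrow> j < p \<Longrightarrow> g i = g j \<Longrightarrow> i = j" for i j
      using g unfolding bij_betw_def inj_on_def by auto
    have fch: "i < p \<Longrightarrow> par (f i) = Some x" for i using Y(2) fY by blast
    have fBF: "i < p \<Longrightarrow> BF E par (f i) = insert x B" for i using Y(2) fY by blast
    show ?thesis unfolding Kpp_minor_def
    proof (rule exI[of _ "\<lambda>i. T (f i)"], rule exI[of _ "\<lambda>i. {g i}"], intro conjI allI impI)
      fix i assume i: "i < p"
      show "T (f i) \<subseteq> V" using TV fch i by blast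
      show "{g i} \<subseteq> V" using gB i BV by blast
      show "connected_set E (T (f i))" by (rule Tcon)
      show "connected_set E {g i}" by (simp add: connected_set_def conn_in_def)
    next
      fix i j assume ij: "i < p" "j < p" "i \<noteq> j"
      show "T (f i) \<inter> T (f j) = {}"
      proof (rule ccontr)
        assume "T (f i) \<inter> T (f j) \<noteq> {}"
        then obtain u where u: "(f i, u) \<in> ?R\<^sup>*" "(f j, u) \<in> ?R\<^sup>*" unfolding T_def by blast
        have "(f i, f j) \<in> ?R\<^sup>* \<or> (f j, f i) \<in> ?R\<^sup>*" by (rule R_chain[OF u(1) u(2)])
        then have "f i = f j"
          using R_children[OF sf fch[OF ij(1)] fch[OF ij(2)]] R_children[OF sf fch[OF ij(2)] fch[OF ij(1)]] by auto
        then show False using finj ij by blast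
      qed
      show "{g i} \<inter> {g j} = {}" using ginj ij by blast
    next
      fix i j assume ij: "i < p" "j < p"
      show "T (f i) \<inter> {g j} = {}" using TS[OF fch[OF ij(1)]] gB[OF ij(2)] by blast
      have "g j \<in> BF E par (f i)" using fBF[OF ij(1)] gB[OF ij(2)] by blast
      then obtain u where "E u (g j)" "tree_le par (f i) u" unfolding BF_def by blast
      then show "\<exists>a\<in>T (f i). \<exists>b\<in>{g j}. E a b" unfolding T_def tree_le_def by blast
    qed
  qed
  have part_b: "card {y. par y = Some x \<and> BF E par y = insert x B} \<le> d"
    if cB: "card B < p" and sep: "Sep V E p \<le> d"
  proof -
    let ?S = "insert x B"
    let ?C = "{y. par y = Some x \<and> BF E par y = ?S}"
    have SV: "?S \<subseteq> V" using BV assms(3) by blast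
    have cS: "card ?S \<le> p" using cB finB card_insert_le_m1 by (simp add: card_insert_if)
    have comp: "T y \<in> components E (V - ?S)" if "y \<in> ?C" for y
    proof -
      have ch: "par y = Some x" and bf: "BF E par y = ?S" using that by auto
      have yT: "y \<in> T y" unfolding T_def by simp
      have TVS: "T y \<subseteq> V - ?S" using TV[OF ch] TS[OF ch] by blast
      have Teq: "T y = {v. conn_in E (V - ?S) y v}"
      proof
        show "T y \<subseteq> {v. conn_in E (V - ?S) y v}"
        proof
          fix v assume "v \<in> T y"
          then have "(y,v) \<in> ?R\<^sup>*" unfolding T_def by simp
          then have "conn_in E (T y) y v" unfolding T_def by (rule conn_T[OF sf])
          then have "conn_in E (V - ?S) y v" by (rule conn_mono[OF _ TVS])
          then show "v \<in> {v. conn_in E (V - ?S) y v}" by simp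
        qed
        show "{v. conn_in E (V - ?S) y v} \<subseteq> T y"
        proof
          fix v assume "v \<in> {v. conn_in E (V - ?S) y v}"
          then have "(y,v) \<in> (induced_rel E (V - ?S))\<^sup>*" unfolding conn_in_def by simp
          then show "v \<in> T y"
          proof (induction rule: rtrancl_induct)
            case base then show ?case by (rule yT)
          next
            case (step w v)
            then have wv: "E w v" "v \<notin> ?S" and yw: "(y,w) \<in> ?R\<^sup>*"
              unfolding induced_rel_def T_def by auto
            have "tree_le par w v \<or> tree_le par v w" using assms(2) wv(1) unfolding normal_forest_def by blast
            then show ?case
            proof
              assume "tree_le par w v"
              then show ?thesis using yw unfolding T_def tree_le_def by auto
            next
              assume vw: "tree_le par v w"
              then have "(v,w) \<in> ?R\<^sup>*" unfolding tree_le_def .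
              then have "(v,y) \<in> ?R\<^sup>* \<or> (y,v) \<in> ?R\<^sup>*" by (rule R_chain[OF _ yw])
              then show ?thesis
              proof
                assume vy: "(v,y) \<in> ?R\<^sup>*"
                show ?thesis
                proof (cases "v = y")
                  case True then show ?thesis using yT by simp
                next
                  case False
                  have "tree_lt par v y" using vy False unfolding tree_lt_def tree_le_def by simp
                  moreover have "tree_le par y w" using yw unfolding tree_le_def .
                  ultimately have "v \<in> BF E par y" unfolding BF_def using wv(1) by auto
                  then have False using bf wv(2) by simp
                  then show ?thesis ..
                qed
              qed (simp add: T_def)
            qed
          qed
        qed
      qed
      have yS: "y \<in> V - ?S" using TVS yT by blast
      have "{v. conn_in E (V - ?S) y v} \<in> components E (V - ?S)"
        unfolding components_def by (rule CollectI, rule exI[of _ y], rule conjI[OF refl yS])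
      then show ?thesis by (simp only: Teq)
    qed
    have inj: "inj_on T ?C"
    proof (rule inj_onI)
      fix y y' assume "y \<in> ?C" "y' \<in> ?C" "T y = T y'"
      then have "(y', y) \<in> ?R\<^sup>*" unfolding T_def by auto
      moreover have "par y = Some x" "par y' = Some x" using \<open>y \<in> ?C\<close> \<open>y' \<in> ?C\<close> by auto
      ultimately show "y = y'" using R_children[OF sf] by metis
    qed
    have fincomp: "finite (components E W)" if "W \<subseteq> V" for W
    proof -
      have "components E W \<subseteq> Pow V"
        using that unfolding components_def conn_in_def by auto
      then show ?thesis using finV finite_subset by blast
    qed
    have "T ` ?C \<subseteq> components E (V - ?S)" using comp by blast
    then have "card ?C \<le> card (components E (V - ?S))"
      using card_inj_on_le[OF inj] fincomp[of "V - ?S"] by blast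
    also have "\<dots> \<le> Sep V E p"
    proof -
      have fin: "finite {card (components E (V - S)) | S. S \<subseteq> V \<and> card S \<le> p}"
      proof -
        have "{card (components E (V - S)) | S. S \<subseteq> V \<and> card S \<le> p}
              \<subseteq> (\<lambda>S. card (components E (V - S))) ` Pow V" by blast
        then show ?thesis using finV finite_subset by blast
      qed
      have "card (components E (V - ?S)) \<in> {card (components E (V - S)) | S. S \<subseteq> V \<and> card S \<le> p}"
        using SV cS by blast
      then show ?thesis unfolding Sep_def by (rule Max_ge[OF fin])
    qed
    finally show ?thesis using sep by linarith
  qed
  show ?thesis using part_a part_b by blast
qed

end
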